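(* Let $\Psi$ be the functor generated by a pattern $\{P\}\cup\{(Q_R,q_{R,1},\dots,q_{R,a(R)}):R\in\tau\}$ such that for every $R\in\tau$ and all $1\le i<j\le a(R)$ the images $q_{R,i}(P)$ and $q_{R,j}(P)$ are disjoint subsets of the universe of $Q_R$. If a $\sigma$-structure $A$ has finite duality, then the $\tau$-structure $\Psi A$ also has finite duality.
   Context: A vocabulary is a finite set of relation symbols $R$ each with an arity $a(R)$. A $\sigma$-structure $A$ consists of a nonempty finite universe and, for each $R\in\sigma$, an $a(R)$-ary relation $R(A)$; homomorphisms are relation-preserving maps between universes of structures with the same vocabulary. A set $\mathcal F$ of $\sigma$-structures is a complete set of obstructions for $A$ if for every $\sigma$-structure $B$: $B\to A$ iff no $F\in\mathcal F$ admits a homomorphism to $B$; $A$ has finite duality if it has a finite complete set of obstructions. Pattern functor: fix a $\sigma$-structure $P$ and for each $R\in\tau$ a $\sigma$-structure $Q_R$ with homomorphisms $q_{R,1},\dots,q_{R,a(R)}:P\to Q_R$. For a $\sigma$-structure $A$, $\Psi A$ is the $\tau$-structure whose universe is the set of all homomorphisms $f:P\to A$, and for $R\in\tau$ of arity $r$, $R(\Psi A)$ is the set of tuples $(f_1,\dots,f_r)$ for which there is a homomorphism $g:Q_R\to A$ with $g\circ q_{R,i}=f_i$ for all $i$. *)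

theory Defs
  imports "HOL-Library.FuncSet"
begin

record ('a, 'r) struc =
  univ :: "'a set"
  rel  :: "'r \<Rightarrow> 'a list set"

definition vocabulary :: "'r set \<Rightarrow> bool" where
  "vocabulary S \<longleftrightarrow> finite S"

definition is_structure :: "'r set \<Rightarrow> ('r \<Rightarrow> nat) \<Rightarrow> ('a, 'r) struc \<Rightarrow> bool" where
  "is_structure S ar A \<longleftrightarrow> finite (univ A) \<and> univ A \<noteq> {} \<and>
     (\<forall>R\<in>S. \<forall>t\<in>rel A R. length t = ar R \<and> set t \<subseteq> univ A)"

definition hom :: "'r set \<Rightarrow> ('a, 'r) struc \<Rightarrow> ('b, 'r) struc \<Rightarrow> ('a \<Rightarrow> 'b) \<Rightarrow> bool" where
  "hom S A B h \<longleftrightarrow> (\<forall>x\<in>univ A. h x \<in> univ B) \<and>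
     (\<forall>R\<in>S. \<forall>t\<in>rel A R. map h t \<in> rel B R)"

definition homto :: "'r set \<Rightarrow> ('a, 'r) struc \<Rightarrow> ('b, 'r) struc \<Rightarrow> bool" where
  "homto S A B \<longleftrightarrow> (\<exists>h. hom S A B h)"

text \<open>Since structures are finite, every structure is isomorphic to one whose universe
  consists of natural numbers; we therefore let B and the obstructions range over
  structures with universe in nat.\<close>

definition complete_obstructions ::
  "'r set \<Rightarrow> ('r \<Rightarrow> nat) \<Rightarrow> ('a, 'r) struc \<Rightarrow> (nat, 'r) struc set \<Rightarrow> bool" where
  "complete_obstructions S ar A \<F> \<longleftrightarrow>
     (\<forall>F\<in>\<F>. is_structure S ar F) \<and>
     (\<forall>B :: (nat, 'r) struc. is_structure S ar B \<longrightarrow>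
        (homto S B A \<longleftrightarrow> (\<forall>F\<in>\<F>. \<not> homto S F B)))"

definition finite_duality :: "'r set \<Rightarrow> ('r \<Rightarrow> nat) \<Rightarrow> ('a, 'r) struc \<Rightarrow> bool" where
  "finite_duality S ar A \<longleftrightarrow> (\<exists>\<F>. finite \<F> \<and> complete_obstructions S ar A \<F>)"

text \<open>Sigma-vocabulary (S, ar), tau-vocabulary (T, art).
  For R in T, Q R is a sigma-structure and q R i (for i < art R, 0-indexed) is a
  homomorphism P \<rightarrow> Q R. Homomorphisms P \<rightarrow> A are represented canonically as
  extensional functions on univ P.\<close>

definition pattern :: "'r set \<Rightarrow> ('r \<Rightarrow> nat) \<Rightarrow> 't set \<Rightarrow> ('t \<Rightarrow> nat) \<Rightarrow>
    ('p, 'r) struc \<Rightarrow> ('t \<Rightarrow> ('c, 'r) struc) \<Rightarrow> ('t \<Rightarrow> nat \<Rightarrow> 'p \<Rightarrow> 'c) \<Rightarrow> bool" where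
  "pattern S ar T art P Q q \<longleftrightarrow> vocabulary S \<and> vocabulary T \<and> is_structure S ar P \<and>
     (\<forall>R\<in>T. is_structure S ar (Q R) \<and> (\<forall>i<art R. hom S P (Q R) (q R i)))"

definition Psi_univ :: "'r set \<Rightarrow> ('p, 'r) struc \<Rightarrow> ('a, 'r) struc \<Rightarrow> ('p \<Rightarrow> 'a) set" where
  "Psi_univ S P A = {f. hom S P A f \<and> f \<in> extensional (univ P)}"

definition Psi :: "'r set \<Rightarrow> 't set \<Rightarrow> ('t \<Rightarrow> nat) \<Rightarrow>
    ('p, 'r) struc \<Rightarrow> ('t \<Rightarrow> ('c, 'r) struc) \<Rightarrow> ('t \<Rightarrow> nat \<Rightarrow> 'p \<Rightarrow> 'c) \<Rightarrow>
    ('a, 'r) struc \<Rightarrow> ('p \<Rightarrow> 'a, 't) struc" where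
  "Psi S T art P Q q A =
     \<lparr> univ = Psi_univ S P A,
       rel = (\<lambda>R. if R \<in> T then
                 {fs. length fs = art R \<and> set fs \<subseteq> Psi_univ S P A \<and>
                      (\<exists>g. hom S (Q R) A g \<and>
                           (\<forall>i<art R. \<forall>x\<in>univ P. g (q R i x) = (fs ! i) x))}
               else {}) \<rparr>"

end

theory Submission
  imports Defs
begin


lemma hom_comp:
  assumes "hom S A B g" "hom S B C h" shows "hom S A C (h \<circ> g)"
  using assms unfolding hom_def by (metis comp_apply map_map)

lemma homto_trans:
  assumes "homto S A B" "homto S B C" shows "homto S A C"
  using assms hom_comp unfolding homto_def by blast

lemma hom_id: "hom S A A id" unfolding hom_def by simp

lemma transfer_nat:
  fixes C :: "('x,'r) struc"
  assumes "is_structure S ar C"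
  shows "\<exists>C' :: (nat,'r) struc. is_structure S ar C' \<and> univ C' = {..<card (univ C)}
     \<and> (\<forall>R. R \<notin> S \<longrightarrow> rel C' R = {}) \<and> homto S C C' \<and> homto S C' C"
proof -
  have fin: "finite (univ C)" and ne: "univ C \<noteq> {}" using assms unfolding is_structure_def by auto
  obtain f where bij: "bij_betw f (univ C) {0..<card (univ C)}" using ex_bij_betw_finite_nat[OF fin] by blast
  define C' :: "(nat,'r) struc" where "C' = \<lparr>univ = {..<card (univ C)}, rel = (\<lambda>R. if R \<in> S then map f ` rel C R else {})\<rparr>"
  have img: "f ` univ C = {..<card (univ C)}" using bij unfolding bij_betw_def by auto
  have inj: "inj_on f (univ C)" using bij unfolding bij_betw_def by auto
  have lt: "\<And>x. x \<in> univ C \<Longrightarrow> f x < card (univ C)" using img by auto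
  have "is_structure S ar C'"
    using assms fin ne img lt unfolding is_structure_def C'_def
    by (auto simp: card_gt_0_iff) (meson lt subsetD)
  moreover have "hom S C C' f" using img unfolding hom_def C'_def by auto
  moreover have "hom S C' C (inv_into (univ C) f)"
  proof -
    { fix R t assume R: "R \<in> S" and t: "t \<in> rel C R"
      have "set t \<subseteq> univ C" using assms R t unfolding is_structure_def by auto
      hence "map (inv_into (univ C) f) (map f t) = t"
        by (simp add: map_idI inv_into_f_f[OF inj] subsetD)
      with t have "map (inv_into (univ C) f) (map f t) \<in> rel C R" by simp }
    moreover have "\<forall>x\<in>univ C'. inv_into (univ C) f x \<in> univ C"
      using img unfolding C'_def by (auto intro: inv_into_into)
    ultimately show ?thesis unfolding hom_def C'_def by auto
  qed
  ultimately show ?thesis unfolding homto_def C'_def by auto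
qed




locale pf =
  fixes S :: "'r set" and ar :: "'r \<Rightarrow> nat" and T :: "'t set" and art :: "'t \<Rightarrow> nat"
    and P :: "('p,'r) struc" and Q :: "'t \<Rightarrow> ('c,'r) struc" and q :: "'t \<Rightarrow> nat \<Rightarrow> 'p \<Rightarrow> 'c"
    and A :: "('a,'r) struc"
  assumes pat: "pattern S ar T art P Q q"
    and disj: "\<forall>R\<in>T. \<forall>i j. i < j \<and> j < art R \<longrightarrow> q R i ` univ P \<inter> q R j ` univ P = {}"
    and Astr: "is_structure S ar A"
begin

abbreviation "PA \<equiv> Psi S T art P Q q A"

lemma Pstr: "is_structure S ar P" using pat unfolding pattern_def by auto
lemma Qstr: "R \<in> T \<Longrightarrow> is_structure S ar (Q R)" using pat unfolding pattern_def by auto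
lemma qhom: "R \<in> T \<Longrightarrow> i < art R \<Longrightarrow> hom S P (Q R) (q R i)" using pat unfolding pattern_def by auto
lemma finT: "finite T" using pat unfolding pattern_def vocabulary_def by auto
lemma finS: "finite S" using pat unfolding pattern_def vocabulary_def by auto

lemma PA_univ: "univ PA = Psi_univ S P A" by (simp add: Psi_def)
lemma PA_rel: "R \<in> T \<Longrightarrow> rel PA R = {fs. length fs = art R \<and> set fs \<subseteq> Psi_univ S P A \<and>
                      (\<exists>g. hom S (Q R) A g \<and>
                           (\<forall>i<art R. \<forall>x\<in>univ P. g (q R i x) = (fs ! i) x))}" by (simp add: Psi_def)

definition Raw :: "(nat,'t) struc \<Rightarrow> ('p \<times> nat + 'c \<times> 't \<times> nat list) set" where
  "Raw B = {Inl (x,b) | x b. x \<in> univ P \<and> b \<in> univ B} \<union>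
           {Inr (c,R,t) | c R t. R \<in> T \<and> t \<in> rel B R \<and> c \<in> univ (Q R)}"

definition resp :: "(nat,'t) struc \<Rightarrow> ('p \<times> nat + 'c \<times> 't \<times> nat list \<Rightarrow> bool) \<Rightarrow> bool" where
  "resp B f \<longleftrightarrow> (\<forall>R\<in>T. \<forall>t\<in>rel B R. \<forall>i<art R. \<forall>x\<in>univ P. f (Inr (q R i x, R, t)) = f (Inl (x, t!i)))"

definition EE :: "(nat,'t) struc \<Rightarrow> ('p \<times> nat + 'c \<times> 't \<times> nat list) \<Rightarrow> ('p \<times> nat + 'c \<times> 't \<times> nat list) \<Rightarrow> bool" where
  "EE B r1 r2 \<longleftrightarrow> (\<forall>f. resp B f \<longrightarrow> f r1 = f r2)"

definition cls :: "(nat,'t) struc \<Rightarrow> ('p \<times> nat + 'c \<times> 't \<times> nat list) \<Rightarrow> ('p \<times> nat + 'c \<times> 't \<times> nat list) set" where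
  "cls B r = {r' \<in> Raw B. EE B r r'}"

definition rawrel :: "(nat,'t) struc \<Rightarrow> 'r \<Rightarrow> ('p \<times> nat + 'c \<times> 't \<times> nat list) list set" where
  "rawrel B R' = {map (\<lambda>x. Inl (x,b)) w | w b. w \<in> rel P R' \<and> b \<in> univ B} \<union>
     {map (\<lambda>c. Inr (c,R,t)) v | v R t. R \<in> T \<and> t \<in> rel B R \<and> v \<in> rel (Q R) R'}"

definition Lam :: "(nat,'t) struc \<Rightarrow> (('p \<times> nat + 'c \<times> 't \<times> nat list) set, 'r) struc" where
  "Lam B = \<lparr>univ = cls B ` Raw B, rel = (\<lambda>R'. map (cls B) ` rawrel B R')\<rparr>"

definition restr :: "(nat,'t) struc \<Rightarrow> nat set \<Rightarrow> (nat,'t) struc" where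
  "restr B X = \<lparr>univ = X, rel = (\<lambda>R. if R \<in> T then {t \<in> rel B R. set t \<subseteq> X} else {})\<rparr>"

definition supp :: "('p \<times> nat + 'c \<times> 't \<times> nat list) \<Rightarrow> nat set" where
  "supp r = (case r of Inl (x,b) \<Rightarrow> {b} | Inr (c,R,t) \<Rightarrow> set t)"

lemma EE_refl: "EE B r r" unfolding EE_def by auto
lemma EE_sym: "EE B r1 r2 \<Longrightarrow> EE B r2 r1" unfolding EE_def by auto
lemma EE_trans: "EE B r1 r2 \<Longrightarrow> EE B r2 r3 \<Longrightarrow> EE B r1 r3" unfolding EE_def by auto

lemma cls_eq: "r1 \<in> Raw B \<Longrightarrow> r2 \<in> Raw B \<Longrightarrow> cls B r1 = cls B r2 \<longleftrightarrow> EE B r1 r2"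
proof
  assume "r1 \<in> Raw B" "r2 \<in> Raw B" "cls B r1 = cls B r2"
  then have "r2 \<in> cls B r1" unfolding cls_def using EE_refl by blast
  then show "EE B r1 r2" unfolding cls_def by auto
next
  assume "EE B r1 r2"
  then show "cls B r1 = cls B r2" unfolding cls_def using EE_sym EE_trans by blast
qed

lemma glue: "EE B (Inr (q R i x, R, t)) (Inl (x, t!i))" if "R \<in> T" "t \<in> rel B R" "i < art R" "x \<in> univ P"
  using that unfolding EE_def resp_def by auto

lemma Raw_Inl: "x \<in> univ P \<Longrightarrow> b \<in> univ B \<Longrightarrow> Inl (x,b) \<in> Raw B" unfolding Raw_def by auto
lemma Raw_Inr: "R \<in> T \<Longrightarrow> t \<in> rel B R \<Longrightarrow> c \<in> univ (Q R) \<Longrightarrow> Inr (c,R,t) \<in> Raw B" unfolding Raw_def by auto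

lemma rawrel_Raw: "R' \<in> S \<Longrightarrow> v \<in> rawrel B R' \<Longrightarrow> set v \<subseteq> Raw B \<and> length v = ar R'"
proof -
  assume R': "R' \<in> S" and v: "v \<in> rawrel B R'"
  show ?thesis using v unfolding rawrel_def
  proof (elim UnE CollectE exE conjE)
    fix w b assume "v = map (\<lambda>x. Inl (x,b)) w" "w \<in> rel P R'" "b \<in> univ B"
    moreover have "length w = ar R' \<and> set w \<subseteq> univ P" using Pstr R' \<open>w \<in> rel P R'\<close> unfolding is_structure_def by auto
    ultimately show ?thesis by (auto intro!: Raw_Inl)
  next
    fix w R t assume "v = map (\<lambda>c. Inr (c,R,t)) w" "R \<in> T" "t \<in> rel B R" "w \<in> rel (Q R) R'"
    moreover have "length w = ar R' \<and> set w \<subseteq> univ (Q R)" using Qstr[OF \<open>R \<in> T\<close>] R' \<open>w \<in> rel (Q R) R'\<close> unfolding is_structure_def by auto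
    ultimately show ?thesis by (auto intro!: Raw_Inr)
  qed
qed

end


context pf begin

lemma PA_relE:
  assumes "R \<in> T" "fs \<in> rel PA R"
  shows "length fs = art R" "set fs \<subseteq> Psi_univ S P A"
    "\<exists>g. hom S (Q R) A g \<and> (\<forall>i<art R. \<forall>x\<in>univ P. g (q R i x) = (fs ! i) x)"
  using assms by (auto simp: PA_rel)

lemma adj2:
  assumes phi: "hom T B PA \<phi>"
  shows "homto S (Lam B) A"
proof -
  have ex: "\<exists>G. hom S (Q R) A G \<and> (\<forall>i<art R. \<forall>x\<in>univ P. G (q R i x) = \<phi> (t!i) x)"
    if R: "R \<in> T" and t: "t \<in> rel B R" for R t
  proof -
    have m: "map \<phi> t \<in> rel PA R" using phi R t unfolding hom_def by auto
    from PA_relE[OF R m] obtain g where g: "hom S (Q R) A g"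
      "\<forall>i<art R. \<forall>x\<in>univ P. g (q R i x) = (map \<phi> t ! i) x" by blast
    have "length t = art R" using PA_relE(1)[OF R m] by simp
    with g show ?thesis by (intro exI[of _ g]) auto
  qed
  define G where "G R t = (SOME G. hom S (Q R) A G \<and> (\<forall>i<art R. \<forall>x\<in>univ P. G (q R i x) = \<phi> (t!i) x))" for R t
  have G: "hom S (Q R) A (G R t) \<and> (\<forall>i<art R. \<forall>x\<in>univ P. G R t (q R i x) = \<phi> (t!i) x)"
    if "R \<in> T" "t \<in> rel B R" for R t
    unfolding G_def using someI_ex[OF ex[OF that]] .
  define g where "g r = (case r of Inl (x,b) \<Rightarrow> \<phi> b x | Inr (c,R,t) \<Rightarrow> G R t c)" for r
  have gresp: "g r1 = g r2" if "EE B r1 r2" for r1 r2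
  proof -
    have "resp B (\<lambda>r. g r = g r1)" unfolding resp_def g_def using G by auto
    then show ?thesis using that unfolding EE_def by auto
  qed
  define h where "h C = g (SOME r. r \<in> Raw B \<and> C = cls B r)" for C
  have hc: "h (cls B r) = g r" if r: "r \<in> Raw B" for r
  proof -
    have "\<exists>r'. r' \<in> Raw B \<and> cls B r = cls B r'" using r by blast
    then have s: "(SOME r'. r' \<in> Raw B \<and> cls B r = cls B r') \<in> Raw B \<and> cls B r = cls B (SOME r'. r' \<in> Raw B \<and> cls B r = cls B r')"
      by (rule someI_ex)
    then have "EE B r (SOME r'. r' \<in> Raw B \<and> cls B r = cls B r')" using cls_eq r by blast
    then show ?thesis unfolding h_def using gresp by auto
  qed
  have gA: "g r \<in> univ A" if "r \<in> Raw B" for r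
  proof -
    { fix x b assume r: "r = Inl (x,b)" "x \<in> univ P" "b \<in> univ B"
      then have "\<phi> b \<in> Psi_univ S P A" using phi PA_univ unfolding hom_def by auto
      then have "g r \<in> univ A" using r unfolding Psi_univ_def hom_def g_def by auto }
    moreover
    { fix c R t assume r: "r = Inr (c,R,t)" "R \<in> T" "t \<in> rel B R" "c \<in> univ (Q R)"
      then have "g r \<in> univ A" using G[of R t] unfolding hom_def g_def by auto }
    ultimately show ?thesis using that unfolding Raw_def by blast
  qed
  have "hom S (Lam B) A h"
    unfolding hom_def
  proof (intro conjI ballI)
    fix C assume "C \<in> univ (Lam B)"
    then obtain r where "r \<in> Raw B" "C = cls B r" unfolding Lam_def by auto
    then show "h C \<in> univ A" using hc gA by auto
  next
    fix R' u assume R': "R' \<in> S" and u: "u \<in> rel (Lam B) R'"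
    then obtain v where v: "v \<in> rawrel B R'" "u = map (cls B) v" unfolding Lam_def by auto
    have "map h u = map g v" using v rawrel_Raw[OF R' v(1)] hc by (auto simp: subset_iff)
    moreover have "map g v \<in> rel A R'"
      using v(1) unfolding rawrel_def
    proof (elim UnE CollectE exE conjE)
      fix w b assume vw: "v = map (\<lambda>x. Inl (x,b)) w" "w \<in> rel P R'" "b \<in> univ B"
      then have "\<phi> b \<in> Psi_univ S P A" using phi PA_univ unfolding hom_def by auto
      then have "map (\<phi> b) w \<in> rel A R'" using vw R' unfolding Psi_univ_def hom_def by auto
      then show ?thesis using vw by (simp add: g_def comp_def)
    next
      fix w R t assume vw: "v = map (\<lambda>c. Inr (c,R,t)) w" "R \<in> T" "t \<in> rel B R" "w \<in> rel (Q R) R'"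
      then have "map (G R t) w \<in> rel A R'" using G[of R t] R' unfolding hom_def by auto
      then show ?thesis using vw by (simp add: g_def comp_def)
    qed
    ultimately show "map h u \<in> rel A R'" by simp
  qed
  then show ?thesis unfolding homto_def by blast
qed

lemma adj1:
  assumes Bs: "is_structure T art B" and h: "hom S (Lam B) A h"
  shows "homto T B PA"
proof -
  define g where "g r = h (cls B r)" for r
  define \<phi> where "\<phi> b = restrict (\<lambda>x. g (Inl (x,b))) (univ P)" for b
  have gA: "g r \<in> univ A" if "r \<in> Raw B" for r
    using h that unfolding hom_def g_def Lam_def by auto
  have grel: "map g v \<in> rel A R'" if "R' \<in> S" "v \<in> rawrel B R'" for R' v
  proof -
    have "map (cls B) v \<in> rel (Lam B) R'" using that unfolding Lam_def by auto
    then have "map h (map (cls B) v) \<in> rel A R'" using h that(1) unfolding hom_def by blast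
    moreover have "map h (map (cls B) v) = map g v" by (induct v) (simp_all add: g_def)
    ultimately show ?thesis by metis
  qed
  have phiU: "\<phi> b \<in> Psi_univ S P A" if b: "b \<in> univ B" for b
  proof -
    have "hom S P A (\<phi> b)" unfolding hom_def
    proof (intro conjI ballI)
      fix x assume "x \<in> univ P" then show "\<phi> b x \<in> univ A" using gA Raw_Inl b unfolding \<phi>_def by auto
    next
      fix R' w assume R': "R' \<in> S" and w: "w \<in> rel P R'"
      have sw: "set w \<subseteq> univ P" using Pstr R' w unfolding is_structure_def by auto
      have e: "map (\<phi> b) w = map g (map (\<lambda>x. Inl (x,b)) w)" using sw unfolding \<phi>_def by (auto simp: subset_iff)
      have "map (\<lambda>x. Inl (x,b)) w \<in> rawrel B R'" using w b unfolding rawrel_def by blast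
      from grel[OF R' this] show "map (\<phi> b) w \<in> rel A R'" unfolding e .
    qed
    then show ?thesis unfolding Psi_univ_def \<phi>_def by auto
  qed
  have "hom T B PA \<phi>" unfolding hom_def
  proof (intro conjI ballI)
    fix b assume "b \<in> univ B" then show "\<phi> b \<in> univ PA" using phiU PA_univ by auto
  next
    fix R t assume R: "R \<in> T" and t: "t \<in> rel B R"
    have lt: "length t = art R" and st: "set t \<subseteq> univ B" using Bs R t unfolding is_structure_def by auto
    define G where "G c = g (Inr (c,R,t))" for c
    have Gh: "hom S (Q R) A G" unfolding hom_def
    proof (intro conjI ballI)
      fix c assume "c \<in> univ (Q R)" then show "G c \<in> univ A" using gA Raw_Inr R t unfolding G_def by auto
    next
      fix R' v assume R': "R' \<in> S" and v: "v \<in> rel (Q R) R'"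
      have "map (\<lambda>c. Inr (c,R,t)) v \<in> rawrel B R'" using v R t unfolding rawrel_def by blast
      from grel[OF R' this] show "map G v \<in> rel A R'" unfolding G_def by (simp add: comp_def)
    qed
    have Gq: "G (q R i x) = (map \<phi> t ! i) x" if i: "i < art R" and x: "x \<in> univ P" for i x
    proof -
      have ti: "t ! i \<in> univ B" using st lt i by auto
      have qi: "q R i x \<in> univ (Q R)" using qhom[OF R i] x unfolding hom_def by auto
      have "cls B (Inr (q R i x, R, t)) = cls B (Inl (x, t!i))"
        using cls_eq[OF Raw_Inr[OF R t qi] Raw_Inl[OF x ti]] glue[OF R t i x] by simp
      then have "G (q R i x) = g (Inl (x, t!i))" unfolding G_def g_def by simp
      also have "\<dots> = \<phi> (t!i) x" using x unfolding \<phi>_def by simp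
      finally show ?thesis using i lt by simp
    qed
    show "map \<phi> t \<in> rel PA R"
      using R lt st phiU Gh Gq by (auto simp: PA_rel intro!: exI[of _ G])
  qed
  then show ?thesis unfolding homto_def by blast
qed

end


context pf begin

lemma unique_idx:
  assumes R: "R \<in> T" and i: "i < art R" "j < art R" and c: "c \<in> q R i ` univ P" "c \<in> q R j ` univ P"
  shows "i = j"
proof (rule ccontr)
  assume "i \<noteq> j"
  then have "i < j \<or> j < i" by auto
  then show False using disj R i c by blast
qed

lemma key:
  assumes Bs: "is_structure T art B" and X: "X0 \<subseteq> X"
    and wit: "\<forall>b\<in>X0. \<forall>R\<in>T. \<forall>i<art R. \<forall>t\<in>rel B R. t!i = b \<longrightarrow> (\<exists>t'\<in>rel B R. t'!i = b \<and> set t' \<subseteq> X)"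
    and r1: "supp r1 \<subseteq> X0" and r2: "supp r2 \<subseteq> X0" and E: "EE B r1 r2"
  shows "EE (restr B X) r1 r2"
  unfolding EE_def
proof (intro allI impI)
  fix f assume fr: "resp (restr B X) f"
  have frr: "f (Inr (q R i x, R, t)) = f (Inl (x, t!i))"
    if "R \<in> T" "t \<in> rel B R" "set t \<subseteq> X" "i < art R" "x \<in> univ P" for R t i x
    using fr that unfolding resp_def restr_def by auto
  define fl where "fl x b = (if b \<in> X0 then f (Inl (x,b)) else False)" for x b
  define f' where "f' r = (case r of Inl (x,b) \<Rightarrow> fl x b
      | Inr (c,R,t) \<Rightarrow> if set t \<subseteq> X0 then f r
          else if (\<exists>i<art R. c \<in> q R i ` univ P)
          then fl (SOME x. x \<in> univ P \<and> q R (SOME i. i<art R \<and> c \<in> q R i ` univ P) x = c)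
                  (t ! (SOME i. i<art R \<and> c \<in> q R i ` univ P))
          else False)" for r
  have "resp B f'" unfolding resp_def
  proof (intro ballI allI impI)
    fix R t i x assume R: "R \<in> T" and t: "t \<in> rel B R" and i: "i < art R" and x: "x \<in> univ P"
    have lt: "length t = art R" using Bs R t unfolding is_structure_def by auto
    show "f' (Inr (q R i x, R, t)) = f' (Inl (x, t ! i))"
    proof (cases "set t \<subseteq> X0")
      case True
      then have "t ! i \<in> X0" using i lt by auto
      then show ?thesis using True frr[OF R t _ i x] X unfolding f'_def fl_def by auto
    next
      case False
      define c where "c = q R i x"
      have ex: "\<exists>i<art R. c \<in> q R i ` univ P" using i x c_def by auto
      define i0 where "i0 = (SOME i. i<art R \<and> c \<in> q R i ` univ P)"
      have i0: "i0 < art R \<and> c \<in> q R i0 ` univ P" unfolding i0_def using someI_ex[OF ex] .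
      then have "i0 = i" using unique_idx[OF R _ i] x c_def by blast
      have ex2: "\<exists>x'. x' \<in> univ P \<and> q R i x' = c" using x c_def by auto
      define xc where "xc = (SOME x'. x' \<in> univ P \<and> q R i x' = c)"
      have xc: "xc \<in> univ P \<and> q R i xc = c" unfolding xc_def using someI_ex[OF ex2] .
      have lhs: "f' (Inr (q R i x, R, t)) = fl xc (t!i)"
      proof -
        have s: "(SOME i. i<art R \<and> c \<in> q R i ` univ P) = i" using \<open>i0 = i\<close> i0_def by simp
        show ?thesis using False ex unfolding f'_def xc_def c_def[symmetric] by (simp add: s)
      qed
      have "fl xc (t!i) = fl x (t!i)"
      proof (cases "t!i \<in> X0")
        case True
        then obtain t' where t': "t' \<in> rel B R" "t'!i = t!i" "set t' \<subseteq> X" using wit R i t by blast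
        have "f (Inl (xc, t!i)) = f (Inr (q R i xc, R, t'))" using frr[OF R t'(1) t'(3) i, of xc] xc t'(2) by simp
        also have "\<dots> = f (Inr (q R i x, R, t'))" using xc c_def by simp
        also have "\<dots> = f (Inl (x, t!i))" using frr[OF R t'(1) t'(3) i x] t'(2) by simp
        finally show ?thesis unfolding fl_def by simp
      qed (simp add: fl_def)
      then show ?thesis using lhs unfolding f'_def by simp
    qed
  qed
  then have "f' r1 = f' r2" using E unfolding EE_def by blast
  moreover have "f' r = f r" if "supp r \<subseteq> X0" for r
    using that unfolding f'_def fl_def supp_def by (auto split: sum.splits)
  ultimately show "f r1 = f r2" using r1 r2 by metis
qed

end


context pf begin

definition "MM = Max (insert 1 (art ` T))"
definition "KK = (SIGMA R:T. {..<art R})"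
definition "bnd (F :: (nat,'r) struc) = (let n0 = (1 + card (univ F) + (\<Sum>R'\<in>S. card (rel F R'))) * MM in n0 + n0 * (card KK * MM))"

lemma MM1: "1 \<le> MM" unfolding MM_def using finT by (auto intro: Max_ge)
lemma MMart: "R \<in> T \<Longrightarrow> art R \<le> MM" unfolding MM_def using finT by (auto intro: Max_ge)
lemma finKK: "finite KK" unfolding KK_def using finT by auto

lemma fin_rel: "is_structure S' ar' C \<Longrightarrow> R \<in> S' \<Longrightarrow> finite (rel C R)"
  unfolding is_structure_def
  by (rule finite_subset[OF _ finite_lists_length_eq[of "univ C" "ar' R"]]) auto

lemma supp_Raw:
  assumes Bs: "is_structure T art B" and r: "r \<in> Raw B"
  shows "supp r \<subseteq> univ B \<and> finite (supp r) \<and> card (supp r) \<le> MM"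
  using r unfolding Raw_def
proof (elim UnE CollectE exE conjE)
  fix x b assume "r = Inl (x,b)" "x \<in> univ P" "b \<in> univ B"
  then show ?thesis using MM1 by (simp add: supp_def)
next
  fix c R t assume rr: "r = Inr (c,R,t)" "R \<in> T" "t \<in> rel B R" "c \<in> univ (Q R)"
  then have "length t = art R" "set t \<subseteq> univ B" using Bs unfolding is_structure_def by auto
  then show ?thesis using rr MMart[of R] card_length[of t] by (simp add: supp_def)
qed

lemma RawE:
  assumes "r \<in> Raw B"
  obtains x b where "r = Inl (x,b)" "x \<in> univ P" "b \<in> univ B"
  | c R t where "r = Inr (c,R,t)" "R \<in> T" "t \<in> rel B R" "c \<in> univ (Q R)"
  using assms unfolding Raw_def by blast

lemma rawrelE:
  assumes "v \<in> rawrel B R'"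
  obtains w b where "v = map (\<lambda>x. Inl (x,b)) w" "w \<in> rel P R'" "b \<in> univ B"
  | w R t where "v = map (\<lambda>c. Inr (c,R,t)) w" "R \<in> T" "t \<in> rel B R" "w \<in> rel (Q R) R'"
  using assms unfolding rawrel_def by blast

lemma Raw_restr:
  assumes r: "r \<in> Raw B" and s: "supp r \<subseteq> X"
  shows "r \<in> Raw (restr B X)"
  using r
proof (cases rule: RawE)
  case (1 x b)
  then show "r \<in> Raw (restr B X)" using s by (auto simp: supp_def restr_def Raw_def)
next
  case (2 c R t)
  then show "r \<in> Raw (restr B X)" using s by (auto simp: supp_def restr_def Raw_def)
qed

lemma piece:
  assumes Bs: "is_structure T art B" and v: "v \<in> rawrel B R'"
  shows "\<exists>Y. Y \<subseteq> univ B \<and> finite Y \<and> card Y \<le> MM \<and>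
     (\<forall>X. Y \<subseteq> X \<longrightarrow> X \<subseteq> univ B \<longrightarrow> v \<in> rawrel (restr B X) R') \<and> (\<forall>r\<in>set v. supp r \<subseteq> Y)"
  using v
proof (cases rule: rawrelE)
  case (1 w b)
  note vw = this
  show ?thesis
    by (rule exI[of _ "{b}"]) (use vw MM1 in \<open>auto simp: supp_def restr_def rawrel_def\<close>)
next
  case (2 w R t)
  note vw = this
  then have "length t = art R" "set t \<subseteq> univ B" using Bs unfolding is_structure_def by auto
  then have c: "card (set t) \<le> MM" using MMart[OF vw(2)] card_length[of t] by simp
  have "v \<in> rawrel (restr B X) R'" if "set t \<subseteq> X" for X
  proof -
    have "t \<in> rel (restr B X) R" using vw that by (simp add: restr_def)
    then show ?thesis unfolding rawrel_def using vw by blast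
  qed
  then show ?thesis
    apply (intro exI[of _ "set t"])
    using vw c \<open>set t \<subseteq> univ B\<close> by (auto simp: supp_def restr_def rawrel_def)
qed

lemma Lam_struct:
  assumes Bs: "is_structure T art B"
  shows "is_structure S ar (Lam B)"
proof -
  have "Raw B \<subseteq> (\<lambda>(x,b). Inl (x,b)) ` (univ P \<times> univ B) \<union>
      Inr ` (\<Union>R\<in>T. \<Union>t\<in>rel B R. univ (Q R) \<times> {(R,t)})" unfolding Raw_def by force
  moreover have "finite ((\<lambda>(x,b). Inl (x,b)) ` (univ P \<times> univ B) \<union>
      Inr ` (\<Union>R\<in>T. \<Union>t\<in>rel B R. univ (Q R) \<times> {(R,t)}))"
    using Pstr Bs Qstr finT fin_rel[OF Bs] unfolding is_structure_def by auto
  ultimately have fin: "finite (Raw B)" by (rule finite_subset)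
  obtain x b where "x \<in> univ P" "b \<in> univ B" using Pstr Bs unfolding is_structure_def by auto
  then have ne: "Raw B \<noteq> {}" using Raw_Inl by blast
  show ?thesis unfolding is_structure_def Lam_def using fin ne rawrel_Raw by fastforce
qed

end


context pf begin

lemma small:
  fixes F :: "(nat,'r) struc"
  assumes Bs: "is_structure T art B" and Fs: "is_structure S ar F" and h: "hom S F (Lam B) h"
  shows "\<exists>X. X \<subseteq> univ B \<and> X \<noteq> {} \<and> card X \<le> bnd F \<and> homto S F (Lam (restr B X))"
proof -
  have ex1: "\<exists>r. r \<in> Raw B \<and> h y = cls B r" if "y \<in> univ F" for y
    using h that unfolding hom_def Lam_def by auto
  define rep where "rep y = (SOME r. r \<in> Raw B \<and> h y = cls B r)" for y
  have rep: "rep y \<in> Raw B \<and> h y = cls B (rep y)" if "y \<in> univ F" for y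
    unfolding rep_def using someI_ex[OF ex1[OF that]] .
  have ex2: "\<exists>v. v \<in> rawrel B R' \<and> map h u = map (cls B) v" if "R' \<in> S" "u \<in> rel F R'" for R' u
  proof -
    have "map h u \<in> map (cls B) ` rawrel B R'" using h that unfolding hom_def Lam_def by auto
    then show ?thesis by (metis imageE)
  qed
  define vt where "vt R' u = (SOME v. v \<in> rawrel B R' \<and> map h u = map (cls B) v)" for R' u
  have vt: "vt R' u \<in> rawrel B R' \<and> map h u = map (cls B) (vt R' u)" if "R' \<in> S" "u \<in> rel F R'" for R' u
    unfolding vt_def using someI_ex[OF ex2[OF that]] .
  have ex3: "\<exists>Y. Y \<subseteq> univ B \<and> finite Y \<and> card Y \<le> MM \<and>
     (\<forall>X. Y \<subseteq> X \<longrightarrow> X \<subseteq> univ B \<longrightarrow> vt R' u \<in> rawrel (restr B X) R') \<and> (\<forall>r\<in>set (vt R' u). supp r \<subseteq> Y)"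
    if "R' \<in> S" "u \<in> rel F R'" for R' u
    by (rule piece[OF Bs conjunct1[OF vt[OF that]]])
  define Yc where "Yc R' u = (SOME Y. Y \<subseteq> univ B \<and> finite Y \<and> card Y \<le> MM \<and>
     (\<forall>X. Y \<subseteq> X \<longrightarrow> X \<subseteq> univ B \<longrightarrow> vt R' u \<in> rawrel (restr B X) R') \<and> (\<forall>r\<in>set (vt R' u). supp r \<subseteq> Y))" for R' u
  have Yc: "Yc R' u \<subseteq> univ B \<and> finite (Yc R' u) \<and> card (Yc R' u) \<le> MM \<and>
     (\<forall>X. Yc R' u \<subseteq> X \<longrightarrow> X \<subseteq> univ B \<longrightarrow> vt R' u \<in> rawrel (restr B X) R') \<and> (\<forall>r\<in>set (vt R' u). supp r \<subseteq> Yc R' u)"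
    if "R' \<in> S" "u \<in> rel F R'" for R' u
    unfolding Yc_def using someI_ex[OF ex3[OF that]] .
  obtain b0 where b0: "b0 \<in> univ B" using Bs unfolding is_structure_def by auto
  have finF: "finite (univ F)" using Fs unfolding is_structure_def by auto
  have finrF: "finite (rel F R')" if "R' \<in> S" for R' using fin_rel[OF Fs that] .
  define X0 where "X0 = {b0} \<union> (\<Union>y\<in>univ F. supp (rep y)) \<union> (\<Union>R'\<in>S. \<Union>u\<in>rel F R'. Yc R' u)"
  have X0B: "X0 \<subseteq> univ B" unfolding X0_def using b0 rep supp_Raw[OF Bs] Yc by blast
  have finX0: "finite X0" unfolding X0_def using finF finS finrF rep supp_Raw[OF Bs] Yc by auto
  have c1: "card (\<Union>y\<in>univ F. supp (rep y)) \<le> card (univ F) * MM"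
  proof -
    have "card (\<Union>y\<in>univ F. supp (rep y)) \<le> (\<Sum>y\<in>univ F. card (supp (rep y)))" using card_UN_le[OF finF] .
    also have "\<dots> \<le> card (univ F) * MM" using sum_bounded_above[of "univ F" "\<lambda>y. card (supp (rep y))" MM]
      rep supp_Raw[OF Bs] by auto
    finally show ?thesis .
  qed
  have c2: "card (\<Union>R'\<in>S. \<Union>u\<in>rel F R'. Yc R' u) \<le> (\<Sum>R'\<in>S. card (rel F R')) * MM"
  proof -
    have "card (\<Union>R'\<in>S. \<Union>u\<in>rel F R'. Yc R' u) \<le> (\<Sum>R'\<in>S. card (\<Union>u\<in>rel F R'. Yc R' u))"
      using card_UN_le[OF finS] .
    also have "\<dots> \<le> (\<Sum>R'\<in>S. card (rel F R') * MM)"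
    proof (rule sum_mono)
      fix R' assume R': "R' \<in> S"
      have "card (\<Union>u\<in>rel F R'. Yc R' u) \<le> (\<Sum>u\<in>rel F R'. card (Yc R' u))" using card_UN_le[OF finrF[OF R']] .
      also have "\<dots> \<le> card (rel F R') * MM" using sum_bounded_above[of "rel F R'" "\<lambda>u. card (Yc R' u)" MM] Yc R' by auto
      finally show "card (\<Union>u\<in>rel F R'. Yc R' u) \<le> card (rel F R') * MM" .
    qed
    also have "\<dots> = (\<Sum>R'\<in>S. card (rel F R')) * MM" by (simp add: sum_distrib_right)
    finally show ?thesis .
  qed
  define n0 where "n0 = (1 + card (univ F) + (\<Sum>R'\<in>S. card (rel F R'))) * MM"
  have cX0: "card X0 \<le> n0"
  proof -
    have "card X0 \<le> card {b0} + card (\<Union>y\<in>univ F. supp (rep y)) + card (\<Union>R'\<in>S. \<Union>u\<in>rel F R'. Yc R' u)"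
      unfolding X0_def
      using card_Un_le[of "{b0} \<union> (\<Union>y\<in>univ F. supp (rep y))" "\<Union>R'\<in>S. \<Union>u\<in>rel F R'. Yc R' u"]
        card_Un_le[of "{b0}" "\<Union>y\<in>univ F. supp (rep y)"] by linarith
    also have "\<dots> \<le> 1 * MM + card (univ F) * MM + (\<Sum>R'\<in>S. card (rel F R')) * MM"
      using c1 c2 MM1 by simp
    also have "\<dots> = n0" unfolding n0_def by (simp add: algebra_simps)
    finally show ?thesis .
  qed
  define wt where "wt b k = (case k of (R,i) \<Rightarrow> if \<exists>t\<in>rel B R. t!i = b then set (SOME t. t\<in>rel B R \<and> t!i = b) else {})" for b k
  have wt: "wt b (R,i) \<subseteq> univ B \<and> finite (wt b (R,i)) \<and> card (wt b (R,i)) \<le> MM" if "R \<in> T" for b R i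
  proof (cases "\<exists>t\<in>rel B R. t!i = b")
    case True
    then have "\<exists>t. t\<in>rel B R \<and> t!i = b" by blast
    from someI_ex[OF this] have s: "(SOME t. t\<in>rel B R \<and> t!i = b) \<in> rel B R" by blast
    then have "length (SOME t. t\<in>rel B R \<and> t!i = b) = art R" "set (SOME t. t\<in>rel B R \<and> t!i = b) \<subseteq> univ B"
      using Bs that unfolding is_structure_def by auto
    then show ?thesis using True MMart[OF that] card_length[of "SOME t. t\<in>rel B R \<and> t!i = b"]
      unfolding wt_def by auto
  qed (simp add: wt_def)
  define X where "X = X0 \<union> (\<Union>b\<in>X0. \<Union>k\<in>KK. wt b k)"
  have wtK: "wt b k \<subseteq> univ B" if "k \<in> KK" for b k using that wt unfolding KK_def by auto
  have XB: "X \<subseteq> univ B" unfolding X_def using X0B wtK by blast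
  have X0X: "X0 \<subseteq> X" unfolding X_def by auto
  have Xne: "X \<noteq> {}" using X0X unfolding X0_def by auto
  have cX: "card X \<le> bnd F"
  proof -
    have "card X \<le> card X0 + card (\<Union>b\<in>X0. \<Union>k\<in>KK. wt b k)" unfolding X_def by (rule card_Un_le)
    also have "card (\<Union>b\<in>X0. \<Union>k\<in>KK. wt b k) \<le> card X0 * (card KK * MM)"
    proof -
      have "card (\<Union>b\<in>X0. \<Union>k\<in>KK. wt b k) \<le> (\<Sum>b\<in>X0. card (\<Union>k\<in>KK. wt b k))" using card_UN_le[OF finX0] .
      also have "\<dots> \<le> card X0 * (card KK * MM)"
      proof (rule sum_bounded_above[of X0 _ "card KK * MM", simplified])
        fix b
        have "card (\<Union>k\<in>KK. wt b k) \<le> (\<Sum>k\<in>KK. card (wt b k))" using card_UN_le[OF finKK] .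
        also have "\<dots> \<le> card KK * MM" using sum_bounded_above[of KK "\<lambda>k. card (wt b k)" MM] wt
          unfolding KK_def by fastforce
        finally show "card (\<Union>k\<in>KK. wt b k) \<le> card KK * MM" .
      qed
      finally show ?thesis .
    qed
    finally have "card X \<le> card X0 + card X0 * (card KK * MM)" by simp
    also have "\<dots> \<le> n0 + n0 * (card KK * MM)" using cX0 by (intro add_mono mult_right_mono) auto
    finally show ?thesis unfolding bnd_def n0_def Let_def .
  qed
  have wit: "\<forall>b\<in>X0. \<forall>R\<in>T. \<forall>i<art R. \<forall>t\<in>rel B R. t!i = b \<longrightarrow> (\<exists>t'\<in>rel B R. t'!i = b \<and> set t' \<subseteq> X)"
  proof (intro ballI allI impI)
    fix b R i t assume b: "b \<in> X0" and R: "R \<in> T" and i: "i < art R" and t: "t \<in> rel B R" and ti: "t!i = b"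
    then have "\<exists>t. t\<in>rel B R \<and> t!i = b" by blast
    from someI_ex[OF this] have s: "(SOME t. t\<in>rel B R \<and> t!i = b) \<in> rel B R \<and> (SOME t. t\<in>rel B R \<and> t!i = b) ! i = b" .
    have "(R,i) \<in> KK" using R i unfolding KK_def by auto
    then have "wt b (R,i) \<subseteq> X" using b unfolding X_def by blast
    moreover have "wt b (R,i) = set (SOME t. t\<in>rel B R \<and> t!i = b)" using t ti unfolding wt_def by auto
    ultimately show "\<exists>t'\<in>rel B R. t'!i = b \<and> set t' \<subseteq> X" using s by auto
  qed
  define h' where "h' y = cls (restr B X) (rep y)" for y
  have repX0: "supp (rep y) \<subseteq> X0" if "y \<in> univ F" for y using that unfolding X0_def by auto
  have "hom S F (Lam (restr B X)) h'" unfolding hom_def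
  proof (intro conjI ballI)
    fix y assume y: "y \<in> univ F"
    have "rep y \<in> Raw (restr B X)" using Raw_restr[OF conjunct1[OF rep[OF y]] subset_trans[OF repX0[OF y] X0X]] .
    then show "h' y \<in> univ (Lam (restr B X))" unfolding h'_def Lam_def by simp
  next
    fix R' u assume R': "R' \<in> S" and u: "u \<in> rel F R'"
    have YX0: "Yc R' u \<subseteq> X0"
    proof -
      have "Yc R' u \<subseteq> (\<Union>u\<in>rel F R'. Yc R' u)" using u by (rule UN_upper)
      also have "\<dots> \<subseteq> (\<Union>R'\<in>S. \<Union>u\<in>rel F R'. Yc R' u)" using R' by (rule UN_upper)
      also have "\<dots> \<subseteq> X0" unfolding X0_def by (rule Un_upper2)
      finally show ?thesis .
    qed
    have Yall: "\<forall>X. Yc R' u \<subseteq> X \<longrightarrow> X \<subseteq> univ B \<longrightarrow> vt R' u \<in> rawrel (restr B X) R'"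
      and Ysupp: "\<forall>r\<in>set (vt R' u). supp r \<subseteq> Yc R' u"
      using Yc[OF R' u] by simp_all
    have vX: "vt R' u \<in> rawrel (restr B X) R'" using Yall[rule_format, OF subset_trans[OF YX0 X0X] XB] .
    have suppv: "supp r \<subseteq> X0" if "r \<in> set (vt R' u)" for r using Ysupp that YX0 by (meson subset_trans)
    have vRaw: "set (vt R' u) \<subseteq> Raw B" using rawrel_Raw[OF R' conjunct1[OF vt[OF R' u]]] by simp
    have su: "set u \<subseteq> univ F" using Fs R' u unfolding is_structure_def by auto
    have mh: "map h u = map (cls B) (vt R' u)" using conjunct2[OF vt[OF R' u]] .
    then have len: "length (vt R' u) = length u" by (metis length_map)
    have "map h' u = map (cls (restr B X)) (vt R' u)"
    proof (rule nth_equalityI)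
      show "length (map h' u) = length (map (cls (restr B X)) (vt R' u))" using len by simp
    next
      fix k assume "k < length (map h' u)"
      then have k: "k < length u" by simp
      then have uk: "u!k \<in> univ F" using su by auto
      have vk: "vt R' u ! k \<in> set (vt R' u)" using k len by simp
      have "h (u!k) = cls B (vt R' u ! k)" using mh k len by (metis nth_map)
      then have "cls B (rep (u!k)) = cls B (vt R' u ! k)" using rep[OF uk] by simp
      moreover have "vt R' u ! k \<in> Raw B" using vRaw vk by blast
      ultimately have E: "EE B (rep (u!k)) (vt R' u ! k)" using cls_eq[OF conjunct1[OF rep[OF uk]]] by blast
      have E': "EE (restr B X) (rep (u!k)) (vt R' u ! k)"
        using key[OF Bs X0X wit repX0[OF uk] suppv[OF vk] E] .
      have r1: "rep (u!k) \<in> Raw (restr B X)" using Raw_restr[OF conjunct1[OF rep[OF uk]] subset_trans[OF repX0[OF uk] X0X]] .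
      have r2: "vt R' u ! k \<in> Raw (restr B X)" using Raw_restr[OF _ subset_trans[OF suppv[OF vk] X0X]] vRaw vk by blast
      show "map h' u ! k = map (cls (restr B X)) (vt R' u) ! k"
        using cls_eq[OF r1 r2] E' k len unfolding h'_def by simp
    qed
    then show "map h' u \<in> rel (Lam (restr B X)) R'" using vX unfolding Lam_def by simp
  qed
  then show ?thesis using XB Xne cX unfolding homto_def by blast
qed

end


context pf begin

lemma restr_struct:
  assumes Bs: "is_structure T art B" and X: "X \<subseteq> univ B" "X \<noteq> {}"
  shows "is_structure T art (restr B X)"
  using Bs X finite_subset[OF X(1)] unfolding is_structure_def restr_def by auto

lemma restr_hom: "X \<subseteq> univ B \<Longrightarrow> homto T (restr B X) B"
  unfolding homto_def hom_def restr_def by (intro exI[of _ id]) auto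

lemma main:
  assumes fd: "finite_duality S ar A"
  shows "finite_duality T art PA"
proof -
  obtain \<F> where finF: "finite \<F>" and co: "complete_obstructions S ar A \<F>"
    using fd unfolding finite_duality_def by blast
  have Fstr: "is_structure S ar F" if "F \<in> \<F>" for F using co that unfolding complete_obstructions_def by blast
  have Fno: "\<not> homto S F A" if F: "F \<in> \<F>" for F
  proof -
    have "homto S F F" using hom_id unfolding homto_def by blast
    then show ?thesis using co F Fstr[OF F] unfolding complete_obstructions_def by blast
  qed
  define N where "N = (\<Sum>F\<in>\<F>. bnd F)"
  have bN: "bnd F \<le> N" if "F \<in> \<F>" for F unfolding N_def using member_le_sum[of F \<F> bnd] that finF by simp
  have compact: "\<exists>X. X \<subseteq> univ B \<and> X \<noteq> {} \<and> card X \<le> N \<and> \<not> homto T (restr B X) PA"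
    if Bs: "is_structure T art B" and nh: "\<not> homto T B PA" for B :: "(nat,'t) struc"
  proof (rule ccontr)
    assume contra: "\<not> ?thesis"
    obtain C :: "(nat,'r) struc" where C: "is_structure S ar C" "homto S (Lam B) C" "homto S C (Lam B)"
      using transfer_nat[OF Lam_struct[OF Bs]] by blast
    have "\<not> homto S F C" if F: "F \<in> \<F>" for F
    proof
      assume "homto S F C"
      then have "homto S F (Lam B)" using C(3) homto_trans by blast
      then obtain hh where hh: "hom S F (Lam B) hh" unfolding homto_def by blast
      obtain X where X: "X \<subseteq> univ B" "X \<noteq> {}" "card X \<le> bnd F" "homto S F (Lam (restr B X))"
        using small[OF Bs Fstr[OF F] hh] by blast
      have cN: "card X \<le> N" using X(3) bN[OF F] by linarith
      have "homto T (restr B X) PA" using contra X(1,2) cN by blast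
      then obtain \<phi> where "hom T (restr B X) PA \<phi>" unfolding homto_def by blast
      then have "homto S (Lam (restr B X)) A" by (rule adj2)
      then have "homto S F A" using X(4) homto_trans by blast
      then show False using Fno[OF F] by blast
    qed
    then have "homto S C A" using co C(1) unfolding complete_obstructions_def by blast
    then have "homto S (Lam B) A" using C(2) homto_trans by blast
    then obtain hA where "hom S (Lam B) A hA" unfolding homto_def by blast
    then have "homto T B PA" using adj1[OF Bs] by blast
    then show False using nh by blast
  qed
  define \<G> where "\<G> = {G :: (nat,'t) struc. univ G \<subseteq> {..<N} \<and> is_structure T art G \<and>
      (\<forall>R. R \<notin> T \<longrightarrow> rel G R = {}) \<and> \<not> homto T G PA}"
  define mk :: "nat set \<times> ('t \<Rightarrow> nat list set) \<Rightarrow> (nat,'t) struc"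
    where "mk p = \<lparr>univ = fst p, rel = (\<lambda>R. if R \<in> T then snd p R else {})\<rparr>" for p
  have "\<G> \<subseteq> mk ` (Pow {..<N} \<times> (\<Pi>\<^sub>E R\<in>T. Pow {t. set t \<subseteq> {..<N} \<and> length t = art R}))"
  proof
    fix G assume G: "G \<in> \<G>"
    have "G = mk (univ G, restrict (rel G) T)"
      using G unfolding mk_def \<G>_def by (cases G) (auto simp: fun_eq_iff)
    moreover have "(univ G, restrict (rel G) T) \<in> Pow {..<N} \<times> (\<Pi>\<^sub>E R\<in>T. Pow {t. set t \<subseteq> {..<N} \<and> length t = art R})"
      using G unfolding \<G>_def is_structure_def by auto
    ultimately show "G \<in> mk ` (Pow {..<N} \<times> (\<Pi>\<^sub>E R\<in>T. Pow {t. set t \<subseteq> {..<N} \<and> length t = art R}))" by blast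
  qed
  moreover have "finite (Pow {..<N} \<times> (\<Pi>\<^sub>E R\<in>T. Pow {t. set t \<subseteq> {..<N} \<and> length t = art R}))"
    using finT by (intro finite_cartesian_product finite_PiE) (auto intro: finite_lists_length_eq)
  ultimately have finG: "finite \<G>" by (meson finite_surj)
  have "complete_obstructions T art PA \<G>" unfolding complete_obstructions_def
  proof (intro conjI allI impI)
    show "\<forall>G\<in>\<G>. is_structure T art G" unfolding \<G>_def by blast
  next
    fix B :: "(nat,'t) struc" assume Bs: "is_structure T art B"
    show "homto T B PA = (\<forall>G\<in>\<G>. \<not> homto T G B)"
    proof
      assume "homto T B PA"
      then show "\<forall>G\<in>\<G>. \<not> homto T G B" unfolding \<G>_def using homto_trans by blast
    next
      assume noG: "\<forall>G\<in>\<G>. \<not> homto T G B"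
      show "homto T B PA"
      proof (rule ccontr)
        assume nh: "\<not> homto T B PA"
        obtain X where X: "X \<subseteq> univ B" "X \<noteq> {}" "card X \<le> N" "\<not> homto T (restr B X) PA"
          using compact[OF Bs nh] by blast
        obtain C :: "(nat,'t) struc" where C: "is_structure T art C" "univ C = {..<card (univ (restr B X))}"
          "\<forall>R. R \<notin> T \<longrightarrow> rel C R = {}" "homto T (restr B X) C" "homto T C (restr B X)"
          using transfer_nat[OF restr_struct[OF Bs X(1,2)]] by blast
        have "\<not> homto T C PA" using C(4) X(4) homto_trans by blast
        moreover have "univ C \<subseteq> {..<N}" using C(2) X(3) by (auto simp: restr_def)
        ultimately have "C \<in> \<G>" using C unfolding \<G>_def by blast
        moreover have "homto T C B" using C(5) restr_hom[OF X(1)] homto_trans by blast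
        ultimately show False using noG by blast
      qed
    qed
  qed
  then show ?thesis using finG unfolding finite_duality_def by blast
qed

end

theorem theorem4p5:
  fixes S :: "'r set" and ar :: "'r \<Rightarrow> nat"
    and T :: "'t set" and art :: "'t \<Rightarrow> nat"
    and P :: "('p, 'r) struc" and Q :: "'t \<Rightarrow> ('c, 'r) struc"
    and q :: "'t \<Rightarrow> nat \<Rightarrow> 'p \<Rightarrow> 'c"
    and A :: "('a, 'r) struc"
  assumes "pattern S ar T art P Q q"
    and "\<forall>R\<in>T. \<forall>i j. i < j \<and> j < art R \<longrightarrow> q R i ` univ P \<inter> q R j ` univ P = {}"
    and "is_structure S ar A"
    and "finite_duality S ar A"
  shows "finite_duality T art (Psi S T art P Q q A)"
proof -
  interpret pf S ar T art P Q q A using assms(1-3) by unfold_locales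
  show ?thesis using assms(4) by (rule main)
qed

end
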